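(* Under both the cost preference model and the overlap preference model, the approval-maximising rule is strategyproof over the class $\mathcal{I}_{\mathit{unit}}$ of allocation instances with unit costs; that is, for every allocation instance $I=\langle\mathcal{P},c,B\rangle$ in which all projects of $\mathcal{P}$ have the same cost, every profile $\boldsymbol{A}$ and every agent $i\in\mathcal{N}$, $F(I,(\boldsymbol{A}_{-i},\mathit{top}_i(\mathcal{P})))\succeq_{\mathit{top}_i(\mathcal{P})}F(I,\boldsymbol{A})$, where $F$ is the approval-maximising rule.
   Context: Let $\mathbb{P}=\{p_1,\dots,p_m\}$ be a finite set of projects, $c:\mathbb{P}\to\mathbb{N}$ a cost function with $c(P)=\sum_{p\in P}c(p)$, $B\in\mathbb{N}$ a budget with $c(p)\le B$ for all $p$; agents $\mathcal{N}=\{1,\dots,n\}$. An allocation instance is $I=\langle\mathcal{P},c,B\rangle$ with $\mathcal{P}\subseteq\mathbb{P}$; a profile is $\boldsymbol{A}=(A_1,\dots,A_n)$ with $A_i\subseteq\mathcal{P}$; $(\boldsymbol{A}_{-i},A_i')$ replaces $A_i$ by $A_i'$; $n_p^{\boldsymbol{A}}=|\{i:p\in A_i\}|$; $\mathcal{A}(I)$ is the set of $A\subseteq\mathcal{P}$ with $c(A)\le B$. Tie-breaking: for a nonempty family $\mathfrak{P}$ of subsets of $\mathbb{P}$, $T(\mathfrak{P})$ is the unique $P\in\mathfrak{P}$ such that for all $P'\in\mathfrak{P}\setminus\{P\}$ the lowest-index project of $(P\setminus P')\cup(P'\setminus P)$ lies in $P$. The approval-maximising rule returns $F(I,\boldsymbol{A})=T(\operatorname*{argmax}_{A\in\mathcal{A}(I)}\sum_{p\in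 A}n_p^{\boldsymbol{A}})$. Greedy selection $\mathit{GREED}(P,\gg)$, for $P\subseteq\mathbb{P}$ and a strict linear order $\gg$ on $P$, examines projects in the order $\gg$ and selects a project iff doing so keeps the total cost of selected projects at most $B$. Each agent $i$ has a strict linear order $\rhd_i$ on $\mathbb{P}$ and ideal set $\mathit{top}_i(\mathcal{P})=\mathit{GREED}(\mathcal{P},\rhd_i|_{\mathcal{P}})$. For $P\subseteq\mathbb{P}$: under the overlap model $A\succeq_P A'$ iff $|A\cap P|\ge|A'\cap P|$; under the cost model $A\succeq_P A'$ iff $c(A\cap P)\ge c(A'\cap P)$. *)

theory Defs
  imports Main
begin

(* Projects are natural numbers; the index of project p is p itself,
   so "lowest-index project" = minimum. *)

definition total_cost :: "(nat \<Rightarrow> nat) \<Rightarrow> nat set \<Rightarrow> nat" where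
  "total_cost c P = (\<Sum>p\<in>P. c p)"

definition feasible :: "nat set \<Rightarrow> (nat \<Rightarrow> nat) \<Rightarrow> nat \<Rightarrow> nat set set" where
  "feasible Pr c B = {A. A \<subseteq> Pr \<and> total_cost c A \<le> B}"

definition tiebreak :: "nat set set \<Rightarrow> nat set" where
  "tiebreak F = (THE P. P \<in> F \<and>
     (\<forall>P'\<in>F - {P}. Min ((P - P') \<union> (P' - P)) \<in> P))"

definition approvals :: "nat \<Rightarrow> (nat \<Rightarrow> nat set) \<Rightarrow> nat \<Rightarrow> nat" where
  "approvals n A p = card {i\<in>{1..n}. p \<in> A i}"

definition approval_score :: "nat \<Rightarrow> (nat \<Rightarrow> nat set) \<Rightarrow> nat set \<Rightarrow> nat" where
  "approval_score n A S = (\<Sum>p\<in>S. approvals n A p)"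

definition approval_max :: "nat set \<Rightarrow> (nat \<Rightarrow> nat) \<Rightarrow> nat \<Rightarrow> nat \<Rightarrow> (nat \<Rightarrow> nat set) \<Rightarrow> nat set" where
  "approval_max Pr c B n A = tiebreak
     {S \<in> feasible Pr c B. \<forall>S'\<in>feasible Pr c B. approval_score n A S' \<le> approval_score n A S}"

fun greed_list :: "(nat \<Rightarrow> nat) \<Rightarrow> nat \<Rightarrow> nat list \<Rightarrow> nat set \<Rightarrow> nat set" where
  "greed_list c B [] S = S"
| "greed_list c B (p # ps) S =
     (if total_cost c S + c p \<le> B then greed_list c B ps (insert p S) else greed_list c B ps S)"

(* the enumeration of P in the order R ((x,y) \<in> R means x is ranked above y) *)
definition order_list :: "nat set \<Rightarrow> (nat \<times> nat) set \<Rightarrow> nat list" where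
  "order_list P R = (THE xs. set xs = P \<and> distinct xs \<and> sorted_wrt (\<lambda>x y. (x, y) \<in> R) xs)"

definition GREED :: "(nat \<Rightarrow> nat) \<Rightarrow> nat \<Rightarrow> nat set \<Rightarrow> (nat \<times> nat) set \<Rightarrow> nat set" where
  "GREED c B P R = greed_list c B (order_list P R) {}"

definition top_set :: "(nat \<Rightarrow> nat) \<Rightarrow> nat \<Rightarrow> (nat \<times> nat) set \<Rightarrow> nat set \<Rightarrow> nat set" where
  "top_set c B R Pr = GREED c B Pr (R \<inter> (Pr \<times> Pr))"

definition pref_overlap :: "nat set \<Rightarrow> nat set \<Rightarrow> nat set \<Rightarrow> bool" where
  "pref_overlap P A A' \<longleftrightarrow> card (A \<inter> P) \<ge> card (A' \<inter> P)"

definition pref_cost :: "(nat \<Rightarrow> nat) \<Rightarrow> nat set \<Rightarrow> nat set \<Rightarrow> nat set \<Rightarrow> bool" where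
  "pref_cost c P A A' \<longleftrightarrow> total_cost c (A \<inter> P) \<ge> total_cost c (A' \<inter> P)"

end

theory Submission
  imports Defs
begin

definition dd :: "nat set \<Rightarrow> nat set \<Rightarrow> nat" where
  "dd P Q = Min ((P - Q) \<union> (Q - P))"

lemma dd_sym: "dd P Q = dd Q P"
  unfolding dd_def by (simp add: Un_commute)

lemma dd_props:
  assumes "finite P" "finite Q" "P \<noteq> Q"
  shows "dd P Q \<in> (P - Q) \<union> (Q - P)"
    and "\<And>x. x < dd P Q \<Longrightarrow> (x \<in> P \<longleftrightarrow> x \<in> Q)"
proof -
  have ne: "(P - Q) \<union> (Q - P) \<noteq> {}" using assms(3) by blast
  have fin: "finite ((P - Q) \<union> (Q - P))" using assms by blast
  show "dd P Q \<in> (P - Q) \<union> (Q - P)" unfolding dd_def using Min_in[OF fin ne] .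
  fix x assume "x < dd P Q"
  then show "x \<in> P \<longleftrightarrow> x \<in> Q" unfolding dd_def using Min_le[OF fin] by force
qed

lemma dd_eqI:
  assumes "finite P" "finite R" "a \<in> (P - R) \<union> (R - P)"
    and "\<And>x. x < a \<Longrightarrow> (x \<in> P \<longleftrightarrow> x \<in> R)"
  shows "dd P R = a"
  unfolding dd_def
proof (rule Min_eqI)
  show "finite ((P - R) \<union> (R - P))" using assms by blast
  show "a \<in> (P - R) \<union> (R - P)" by fact
  fix y assume "y \<in> (P - R) \<union> (R - P)"
  then show "a \<le> y" using assms(4) by (metis DiffE UnE not_le_imp_less)
qed

lemma dd_trans:
  assumes "finite P" "finite Q" "finite R" "P \<noteq> Q" "Q \<noteq> R"
    and "dd P Q \<in> P" "dd Q R \<in> Q"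
  shows "P \<noteq> R \<and> dd P R \<in> P"
proof -
  define a where "a = dd P Q"
  define b where "b = dd Q R"
  have a1: "a \<in> P" "a \<notin> Q" using dd_props(1)[OF assms(1,2,4)] assms(6) a_def by auto
  have a2: "\<And>x. x < a \<Longrightarrow> (x \<in> P \<longleftrightarrow> x \<in> Q)" using dd_props(2)[OF assms(1,2,4)] a_def by auto
  have b1: "b \<in> Q" "b \<notin> R" using dd_props(1)[OF assms(2,3,5)] assms(7) b_def by auto
  have b2: "\<And>x. x < b \<Longrightarrow> (x \<in> Q \<longleftrightarrow> x \<in> R)" using dd_props(2)[OF assms(2,3,5)] b_def by auto
  have "a \<noteq> b" using a1 b1 by auto
  then consider "a < b" | "b < a" by linarith
  then show ?thesis
  proof cases
    case 1
    have "a \<notin> R" using b2[OF 1] a1 by auto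
    have "dd P R = a"
      by (rule dd_eqI) (use assms a1 `a \<notin> R` a2 b2 1 in auto)
    then show ?thesis using a1 `a \<notin> R` by auto
  next
    case 2
    have "b \<in> P" using a2[OF 2] b1 by auto
    have "dd P R = b"
      by (rule dd_eqI) (use assms b1 `b \<in> P` a2 b2 2 in auto)
    then show ?thesis using b1 `b \<in> P` by auto
  qed
qed

lemma tiebreak_exists:
  assumes "finite F" "F \<noteq> {}" "\<forall>P\<in>F. finite P"
  shows "\<exists>P\<in>F. \<forall>P'\<in>F - {P}. dd P P' \<in> P"
  using assms
proof (induction F rule: finite_induct)
  case empty then show ?case by simp
next
  case (insert X F)
  show ?case
  proof (cases "F = {}")
    case True then show ?thesis by auto
  next
    case False
    then obtain P where P: "P \<in> F" "\<forall>P'\<in>F - {P}. dd P P' \<in> P" using insert by auto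
    show ?thesis
    proof (cases "X = P \<or> dd P X \<in> P")
      case True
      then show ?thesis using P by (rule_tac x=P in bexI) auto
    next
      case False
      have fin: "finite X" "finite P" using insert P by auto
      have XP: "dd X P \<in> X" using dd_props(1)[OF fin(2,1)] False dd_sym[of X P] by auto
      have "\<forall>P'\<in>insert X F - {X}. dd X P' \<in> X"
      proof
        fix P' assume P': "P' \<in> insert X F - {X}"
        show "dd X P' \<in> X"
        proof (cases "P' = P")
          case True then show ?thesis using XP by simp
        next
          case False
          then show ?thesis using dd_trans[of X P P'] XP P P' insert fin by auto
        qed
      qed
      then show ?thesis by auto
    qed
  qed
qed

lemma tiebreak_prop:
  assumes "finite F" "F \<noteq> {}" "\<forall>P\<in>F. finite P"
  shows "tiebreak F \<in> F \<and> (\<forall>P'\<in>F - {tiebreak F}. dd (tiebreak F) P' \<in> tiebreak F)"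
proof -
  obtain P where P: "P \<in> F" "\<forall>P'\<in>F - {P}. dd P P' \<in> P" using tiebreak_exists[OF assms] by blast
  have uniq: "Q = P" if "Q \<in> F" "\<forall>P'\<in>F - {Q}. dd Q P' \<in> Q" for Q
  proof (rule ccontr)
    assume ne: "Q \<noteq> P"
    have "dd Q P \<in> Q" "dd P Q \<in> P" using that P ne by auto
    then show False using dd_props(1)[of Q P] ne dd_sym[of P Q] assms(3) that(1) P(1) by auto
  qed
  have "tiebreak F = P"
    unfolding tiebreak_def
  proof (rule the_equality)
    show "P \<in> F \<and> (\<forall>P'\<in>F - {P}. Min ((P - P') \<union> (P' - P)) \<in> P)"
      using P unfolding dd_def by blast
    fix Q assume "Q \<in> F \<and> (\<forall>P'\<in>F - {Q}. Min ((Q - P') \<union> (P' - Q)) \<in> Q)"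
    then show "Q = P" using uniq unfolding dd_def by blast
  qed
  then show ?thesis using P by simp
qed

lemma tc_unit:
  assumes "\<forall>p\<in>Pr. c p = c0" "S \<subseteq> Pr"
  shows "total_cost c S = c0 * card S"
proof -
  have "total_cost c S = (\<Sum>p\<in>S. c0)" unfolding total_cost_def
    using assms by (intro sum.cong) auto
  then show ?thesis by simp
qed

definition Fam :: "nat set \<Rightarrow> (nat \<Rightarrow> nat) \<Rightarrow> nat \<Rightarrow> (nat \<Rightarrow> nat) \<Rightarrow> nat set set" where
  "Fam Pr c B g = {S \<in> feasible Pr c B. \<forall>S'\<in>feasible Pr c B. sum g S' \<le> sum g S}"

lemma W_props:
  assumes fin: "finite Pr" and unit: "\<forall>p\<in>Pr. c p = c0"
    and W: "W = tiebreak (Fam Pr c B g)"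
  shows "W \<subseteq> Pr" "c0 * card W \<le> B"
    and "\<And>p q. p \<in> W \<Longrightarrow> q \<in> Pr - W \<Longrightarrow> g q < g p \<or> (g q = g p \<and> p < q)"
    and "\<And>q. q \<in> Pr - W \<Longrightarrow> \<not> c0 * (card W + 1) \<le> B"
proof -
  have feq: "feasible Pr c B = {S. S \<subseteq> Pr \<and> c0 * card S \<le> B}"
    unfolding feasible_def using tc_unit[OF unit] by auto
  have ffin: "finite (feasible Pr c B)" unfolding feasible_def using fin
    by (metis (no_types, lifting) Collect_mono Pow_def finite_Pow_iff finite_subset)
  have fne: "feasible Pr c B \<noteq> {}" using feq by auto
  define m where "m = Max (sum g ` feasible Pr c B)"
  have "m \<in> sum g ` feasible Pr c B" unfolding m_def using ffin fne by simp
  then obtain S0 where S0: "S0 \<in> feasible Pr c B" "sum g S0 = m" by auto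
  have "\<forall>S'\<in>feasible Pr c B. sum g S' \<le> sum g S0" using S0 ffin unfolding m_def by simp
  then have Fne: "Fam Pr c B g \<noteq> {}" unfolding Fam_def using S0 by auto
  have Ffin: "finite (Fam Pr c B g)" unfolding Fam_def using ffin by simp
  have Fmem: "\<forall>P\<in>Fam Pr c B g. finite P" unfolding Fam_def feq using fin finite_subset by auto
  have TB: "W \<in> Fam Pr c B g" "\<forall>P'\<in>Fam Pr c B g - {W}. dd W P' \<in> W"
    using tiebreak_prop[OF Ffin Fne Fmem] W by auto
  have Wf: "W \<subseteq> Pr" "c0 * card W \<le> B" "\<forall>S'\<in>feasible Pr c B. sum g S' \<le> sum g W"
    using TB(1) unfolding Fam_def feq by auto
  have finW: "finite W" using Wf(1) fin finite_subset by auto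
  show "W \<subseteq> Pr" by fact
  show "c0 * card W \<le> B" by fact
  show "g q < g p \<or> (g q = g p \<and> p < q)" if pq: "p \<in> W" "q \<in> Pr - W" for p q
  proof -
    define W2 where "W2 = insert q (W - {p})"
    have qn: "q \<notin> W - {p}" using pq by auto
    have fWp: "finite (W - {p})" using finW by simp
    have c1: "card W2 = Suc (card (W - {p}))" unfolding W2_def
      using card_insert_disjoint[OF fWp qn] .
    have c2: "card W > 0" using finW pq(1) card_gt_0_iff by blast
    have c3: "card (W - {p}) = card W - 1" using card_Diff_singleton[OF pq(1)] .
    have cW2: "card W2 = card W" using c1 c2 c3 by linarith
    have W2s: "W2 \<subseteq> Pr" unfolding W2_def using Wf(1) pq by blast
    have W2f: "W2 \<in> feasible Pr c B" unfolding feq using cW2 Wf(2) W2s by simp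
    have "sum g W = g p + sum g (W - {p})" using sum.remove[OF finW pq(1)] .
    moreover have "sum g W2 = g q + sum g (W - {p})" unfolding W2_def
      using sum.insert[OF fWp qn] .
    ultimately have s2: "sum g W2 + g p = sum g W + g q" by simp
    have le: "sum g W2 \<le> sum g W" using Wf(3) W2f by auto
    show ?thesis
    proof (cases "g q = g p")
      case True
      then have "sum g W2 = sum g W" using s2 by simp
      then have "W2 \<in> Fam Pr c B g" unfolding Fam_def using W2f Wf(3) by auto
      moreover have "W2 \<noteq> W" unfolding W2_def using pq by auto
      ultimately have "dd W W2 \<in> W" using TB(2) by auto
      moreover have "(W - W2) \<union> (W2 - W) = {p, q}" unfolding W2_def using pq by auto
      ultimately have "min p q \<in> W" unfolding dd_def by simp
      then have "p < q" using pq by (metis DiffE min_def nat_less_le)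
      then show ?thesis using True by simp
    next
      case False
      then show ?thesis using s2 le by simp
    qed
  qed
  show "\<not> c0 * (card W + 1) \<le> B" if q: "q \<in> Pr - W" for q
  proof
    assume cb: "c0 * (card W + 1) \<le> B"
    define W2 where "W2 = insert q W"
    have W2f: "W2 \<in> feasible Pr c B" unfolding feq W2_def using cb Wf(1,2) q finW by auto
    have s2: "sum g W2 = sum g W + g q" unfolding W2_def using q finW by simp
    have "sum g W2 \<le> sum g W" using Wf(3) W2f by auto
    then have "sum g W2 = sum g W" using s2 by simp
    then have "W2 \<in> Fam Pr c B g" unfolding Fam_def using W2f Wf(3) by auto
    moreover have "W2 \<noteq> W" unfolding W2_def using q by auto
    ultimately have "dd W W2 \<in> W" using TB(2) by auto
    moreover have "(W - W2) \<union> (W2 - W) = {q}" unfolding W2_def using q by auto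
    ultimately show False unfolding dd_def using q by simp
  qed
qed

lemma am_eq: "approval_max Pr c B n A = tiebreak (Fam Pr c B (approvals n A))"
  unfolding approval_max_def approval_score_def Fam_def by simp

lemma card_split: "finite W \<Longrightarrow> card W = card (W \<inter> T) + card (W - T)"
proof -
  assume f: "finite W"
  have "W = (W \<inter> T) \<union> (W - T)" by blast
  then have "card W = card ((W \<inter> T) \<union> (W - T))" by simp
  also have "\<dots> = card (W \<inter> T) + card (W - T)"
    by (rule card_Un_disjoint) (use f in auto)
  finally show ?thesis .
qed

lemma appr_mono1:
  assumes "p \<in> T" shows "approvals n A p \<le> approvals n (A(i := T)) p"
  unfolding approvals_def by (rule card_mono) (use assms in auto)

lemma appr_mono2:
  assumes "p \<notin> T" shows "approvals n (A(i := T)) p \<le> approvals n A p"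
  unfolding approvals_def by (rule card_mono) (use assms in auto)

theorem proposition9:
  fixes PP Pr :: "nat set" and c :: "nat \<Rightarrow> nat" and B n i :: nat
    and A :: "nat \<Rightarrow> nat set" and R :: "nat \<Rightarrow> (nat \<times> nat) set"
  assumes "finite PP"
    and "\<forall>p\<in>PP. c p \<le> B"
    and "Pr \<subseteq> PP"
    and unit: "\<forall>p\<in>Pr. \<forall>q\<in>Pr. c p = c q"
    and "\<forall>j\<in>{1..n}. A j \<subseteq> Pr"
    and "\<forall>j\<in>{1..n}. strict_linear_order_on PP (R j) \<and> R j \<subseteq> PP \<times> PP"
    and "i \<in> {1..n}"
  shows "pref_cost c (top_set c B (R i) Pr)
           (approval_max Pr c B n (A(i := top_set c B (R i) Pr))) (approval_max Pr c B n A)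
       \<and> pref_overlap (top_set c B (R i) Pr)
           (approval_max Pr c B n (A(i := top_set c B (R i) Pr))) (approval_max Pr c B n A)"
proof -
  obtain c0 where unit0: "\<forall>p\<in>Pr. c p = c0"
  proof (cases "Pr = {}")
    case True then show ?thesis using that by auto
  next
    case False
    then obtain p0 where "p0 \<in> Pr" by auto
    then show ?thesis using that unit by blast
  qed
  have fin: "finite Pr" using assms(1,3) finite_subset by auto
  define T where "T = top_set c B (R i) Pr"
  define A' where "A' = A(i := T)"
  define W where "W = approval_max Pr c B n A"
  define W' where "W' = approval_max Pr c B n A'"
  have WW: "W = tiebreak (Fam Pr c B (approvals n A))" unfolding W_def am_eq ..
  have WW': "W' = tiebreak (Fam Pr c B (approvals n A'))" unfolding W'_def am_eq ..
  note P = W_props[OF fin unit0 WW]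
  note P' = W_props[OF fin unit0 WW']
  have finW: "finite W" using P(1) fin finite_subset by auto
  have finW': "finite W'" using P'(1) fin finite_subset by auto
  have cardeq: "card W = card W'"
  proof (rule ccontr)
    assume "card W \<noteq> card W'"
    then consider "card W < card W'" | "card W' < card W" by linarith
    then show False
    proof cases
      case 1
      have "\<not> W' \<subseteq> W"
      proof
        assume "W' \<subseteq> W"
        then have "card W' \<le> card W" by (rule card_mono[OF finW])
        with 1 show False by linarith
      qed
      then obtain q where q: "q \<in> W'" "q \<notin> W" by auto
      have "c0 * (card W + 1) \<le> c0 * card W'" using 1 by (intro mult_le_mono2) simp
      then have "c0 * (card W + 1) \<le> B" using P'(2) by linarith
      moreover have "q \<in> Pr - W" using q P'(1) by blast
      ultimately show False using P(4) by blast
    next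
      case 2
      have "\<not> W \<subseteq> W'"
      proof
        assume "W \<subseteq> W'"
        then have "card W \<le> card W'" by (rule card_mono[OF finW'])
        with 2 show False by linarith
      qed
      then obtain q where q: "q \<in> W" "q \<notin> W'" by auto
      have "c0 * (card W' + 1) \<le> c0 * card W" using 2 by (intro mult_le_mono2) simp
      then have "c0 * (card W' + 1) \<le> B" using P(2) by linarith
      moreover have "q \<in> Pr - W'" using q P(1) by blast
      ultimately show False using P'(4) by blast
    qed
  qed
  have key: "card (W \<inter> T) \<le> card (W' \<inter> T)"
  proof (rule ccontr)
    assume lt: "\<not> ?thesis"
    have "\<not> W \<inter> T \<subseteq> W' \<inter> T"
    proof
      assume "W \<inter> T \<subseteq> W' \<inter> T"
      then have "card (W \<inter> T) \<le> card (W' \<inter> T)" by (rule card_mono[rotated]) (use finW' in simp)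
      with lt show False by linarith
    qed
    then obtain p where p: "p \<in> W" "p \<in> T" "p \<notin> W'" by auto
    have "card (W - T) < card (W' - T)"
      using lt card_split[OF finW, of T] card_split[OF finW', of T] cardeq by linarith
    have "\<not> W' - T \<subseteq> W - T"
    proof
      assume "W' - T \<subseteq> W - T"
      then have "card (W' - T) \<le> card (W - T)" by (rule card_mono[rotated]) (use finW in simp)
      with `card (W - T) < card (W' - T)` show False by linarith
    qed
    then obtain q where q: "q \<in> W'" "q \<notin> T" "q \<notin> W" by auto
    have pP: "p \<in> Pr - W'" using p P(1) by blast
    have qP: "q \<in> Pr - W" using q P'(1) by blast
    have h1: "approvals n A q < approvals n A p \<or> (approvals n A q = approvals n A p \<and> p < q)"
      using P(3)[OF p(1) qP] .
    have h2: "approvals n A' p < approvals n A' q \<or> (approvals n A' p = approvals n A' q \<and> q < p)"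
      using P'(3)[OF q(1) pP] .
    have m1: "approvals n A p \<le> approvals n A' p" unfolding A'_def using appr_mono1[OF p(2)] .
    have m2: "approvals n A' q \<le> approvals n A q" unfolding A'_def using appr_mono2[OF q(2)] .
    show False using h1 h2 m1 m2 by linarith
  qed
  have "total_cost c (W' \<inter> T) = c0 * card (W' \<inter> T)" using tc_unit[OF unit0, of "W' \<inter> T"] P'(1) by blast
  moreover have "total_cost c (W \<inter> T) = c0 * card (W \<inter> T)" using tc_unit[OF unit0, of "W \<inter> T"] P(1) by blast
  ultimately have "total_cost c (W' \<inter> T) \<ge> total_cost c (W \<inter> T)" using key by simp
  then show ?thesis using key unfolding pref_cost_def pref_overlap_def
    by (simp add: W_def W'_def A'_def T_def Int_commute)
qed

end
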